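(* Let $(X,d_X,m_X)$ and $(Y,d_Y,m_Y)$ be metric measure spaces and $p:X\to Y$ a 1-Lipschitz map with $p_*m_X=m_Y$, and let $\{\mu_y\}_{y\in Y}$ be the disintegration of $m_X$ for $p$. Assume there exists a Borel set $\Omega\subset Y$ with $m_Y(Y\setminus\Omega)=0$ such that $W_2(\mu_y,\mu_{y'})=d_Y(y,y')$ for all $y,y'\in\Omega$. Then $p$ is a submetry. In particular, $\{p^{-1}(y)\}_{y\in Y}$ is a metric measure foliation of $X$ and $Y$ is mm-isomorphic to the quotient space $X^*$.
   Context: A metric measure space $(X,d,m)$: complete separable metric space with Borel measure satisfying $0<m(B_r(x))<\infty$ for all $x$, $r>0$. The disintegration of $m_X$ for $p$ is the ($m_Y$-a.e. unique) family of Borel probability measures with $y\mapsto\mu_y(A)$ Borel, $\mu_y(X\setminus p^{-1}(y))=0$ for $m_Y$-a.e. $y$, and $\int f\,dm_X=\int\int f\,d\mu_y\,dm_Y(y)$ for Borel $f\ge0$. A map $p:X\to Y$ is a submetry if $p(B_r(x))=B_r(p(x))$ for all $x\in X$, $r>0$ (open balls). A metric foliation is a family of pairwise disjoint closed sets covering $X$ with $d(F,F')=d(x,F')$ for leaves $F,F'$, $x\in F$; its quotient $X^*$ has distance $d^*(y,y')=d(p^{-1}(y),p^{-1}(y'))$ and measure $m^*=p_*m$; it is a metric measure foliation if $m^*$ is locally finite and the disintegration of $m$ for the quotient map satisfies $W_2(\mu_y,\mu_{y'})=d^*(y,y')$ on a Borel set of full $m^*$-measure. mm-isomorphic means there is a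 measure-preserving isometry. *)

theory Defs
  imports "HOL-Probability.Probability"
begin

text \<open>A metric measure space: the underlying complete separable metric space is the
  type (class polish_space) with its distance; the measure is a Borel measure giving
  positive finite mass to every open ball.\<close>
definition mm_space :: "'a::polish_space measure \<Rightarrow> bool" where
  "mm_space m \<longleftrightarrow> sets m = sets (borel :: 'a measure) \<and>
     (\<forall>x r. r > 0 \<longrightarrow> 0 < emeasure m (ball x r) \<and> emeasure m (ball x r) < \<infinity>)"

definition disintegration ::
  "'a measure \<Rightarrow> 'b measure \<Rightarrow> ('a \<Rightarrow> 'b) \<Rightarrow> ('b \<Rightarrow> 'a measure) \<Rightarrow> bool" where
  "disintegration mX mY p \<mu> \<longleftrightarrow>
     (\<forall>y\<in>space mY. prob_space (\<mu> y) \<and> sets (\<mu> y) = sets mX) \<and>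
     (\<forall>A\<in>sets mX. (\<lambda>y. emeasure (\<mu> y) A) \<in> borel_measurable mY) \<and>
     (AE y in mY. emeasure (\<mu> y) (space mX - p -` {y}) = 0) \<and>
     (\<forall>f \<in> borel_measurable mX.
        (\<integral>\<^sup>+ x. f x \<partial>mX) = (\<integral>\<^sup>+ y. (\<integral>\<^sup>+ x. f x \<partial>(\<mu> y)) \<partial>mY))"

definition couplings :: "'a::polish_space measure \<Rightarrow> 'a measure \<Rightarrow> ('a \<times> 'a) measure set" where
  "couplings \<mu> \<nu> = {\<pi>. sets \<pi> = sets (borel :: ('a \<times> 'a) measure) \<and> prob_space \<pi> \<and>
      distr \<pi> borel fst = \<mu> \<and> distr \<pi> borel snd = \<nu>}"

definition W2_sq :: "'a::polish_space measure \<Rightarrow> 'a measure \<Rightarrow> ennreal" where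
  "W2_sq \<mu> \<nu> = (INF \<pi>\<in>couplings \<mu> \<nu>. \<integral>\<^sup>+ z. ennreal ((dist (fst z) (snd z))\<^sup>2) \<partial>\<pi>)"

definition W2 :: "'a::polish_space measure \<Rightarrow> 'a measure \<Rightarrow> ennreal" where
  "W2 \<mu> \<nu> = (if W2_sq \<mu> \<nu> = \<infinity> then \<infinity> else ennreal (sqrt (enn2real (W2_sq \<mu> \<nu>))))"

definition submetry :: "('a::metric_space \<Rightarrow> 'b::metric_space) \<Rightarrow> bool" where
  "submetry p \<longleftrightarrow> (\<forall>x r. r > 0 \<longrightarrow> p ` ball x r = ball (p x) r)"

definition metric_foliation :: "'a::metric_space set set \<Rightarrow> bool" where
  "metric_foliation P \<longleftrightarrow>
     (\<forall>F\<in>P. F \<noteq> {} \<and> closed F) \<and>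
     (\<forall>F\<in>P. \<forall>F'\<in>P. F \<noteq> F' \<longrightarrow> F \<inter> F' = {}) \<and>
     \<Union>P = UNIV \<and>
     (\<forall>F\<in>P. \<forall>F'\<in>P. \<forall>x\<in>F. setdist F F' = infdist x F')"

definition quot_map :: "'a set set \<Rightarrow> 'a \<Rightarrow> 'a set" where
  "quot_map P x = (THE F. F \<in> P \<and> x \<in> F)"

definition quot_borel :: "'a::metric_space set set \<Rightarrow> 'a set measure" where
  "quot_borel P = sigma P {U. openin (Metric_space.mtopology P setdist) U}"

definition quot_measure :: "'a::metric_space measure \<Rightarrow> 'a set set \<Rightarrow> 'a set measure" where
  "quot_measure m P = distr m (quot_borel P) (quot_map P)"

definition metric_measure_foliation :: "'a::polish_space measure \<Rightarrow> 'a set set \<Rightarrow> bool" where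
  "metric_measure_foliation m P \<longleftrightarrow>
     metric_foliation P \<and>
     (\<forall>F\<in>P. \<exists>r>0. emeasure (quot_measure m P) (Metric_space.mball P setdist F r) < \<infinity>) \<and>
     (\<exists>\<nu>. disintegration m (quot_measure m P) (quot_map P) \<nu> \<and>
        (\<exists>\<Omega>\<in>sets (quot_measure m P). emeasure (quot_measure m P) (P - \<Omega>) = 0 \<and>
           (\<forall>F\<in>\<Omega>. \<forall>F'\<in>\<Omega>. W2 (\<nu> F) (\<nu> F') = ennreal (setdist F F'))))"

definition mm_isomorphic ::
  "'a set \<Rightarrow> ('a \<Rightarrow> 'a \<Rightarrow> real) \<Rightarrow> 'a measure \<Rightarrow> 'b set \<Rightarrow> ('b \<Rightarrow> 'b \<Rightarrow> real) \<Rightarrow> 'b measure \<Rightarrow> bool" where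
  "mm_isomorphic A dA mA B dB mB \<longleftrightarrow>
     (\<exists>\<phi>. bij_betw \<phi> A B \<and> (\<forall>a\<in>A. \<forall>a'\<in>A. dB (\<phi> a) (\<phi> a') = dA a a') \<and>
          distr mA mB \<phi> = mB)"

end

theory Submission
  imports Defs
begin
lemma lift_exact:
  fixes p :: "'a::complete_space \<Rightarrow> 'b::metric_space"
  assumes cont: "continuous_on UNIV p"
    and A: "\<And>x y e. e > 0 \<Longrightarrow> \<exists>x'. dist x x' < dist (p x) y + e \<and> dist (p x') y < e"
    and d: "\<delta> > 0"
  shows "\<exists>x'. p x' = y \<and> dist x x' < dist (p x) y + \<delta>"
proof -
  define c where "c = \<delta> / 8"
  have c: "c > 0" using d by (simp add: c_def)
  define e :: "nat \<Rightarrow> real" where "e n = c / 2 ^ n" for n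
  have epos: "e n > 0" for n using c by (simp add: e_def)
  define step where "step z n = (SOME x'. dist z x' < dist (p z) y + e n \<and> dist (p x') y < e n)" for z n
  have step: "dist z (step z n) < dist (p z) y + e n \<and> dist (p (step z n)) y < e n" for z n
    unfolding step_def by (rule someI_ex, rule A, rule epos)
  define s where "s n = rec_nat x (\<lambda>n z. step z n) n" for n
  have s0: "s 0 = x" and sS: "s (Suc n) = step (s n) n" for n by (simp_all add: s_def)
  have py: "dist (p (s (Suc n))) y < e n" for n using step sS by metis
  have ds: "dist (s n) (s (Suc n)) < dist (p (s n)) y + e n" for n using step sS by metis
  have ds1: "dist (s n) (s (Suc n)) < 3 * e n" if n1: "n \<ge> 1" for n
  proof -
    obtain m where m: "n = Suc m" using n1 by (cases n) auto
    have "e m = 2 * e n" using m by (simp add: e_def)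
    then show ?thesis using ds[of n] py[of m] m by simp
  qed
  have tail: "dist (s m) (s (m + k)) \<le> 6 * e m * (1 - (1/2)^k)" if "m \<ge> 1" for m k
  proof (induction k)
    case 0 then show ?case by simp
  next
    case (Suc k)
    have ek: "e (m + k) = e m * (1/2)^k" by (simp add: e_def power_add field_simps)
    have "dist (s m) (s (m + Suc k)) \<le> dist (s m) (s (m + k)) + dist (s (m+k)) (s (Suc (m + k)))"
      by (simp add: dist_triangle)
    also have "\<dots> \<le> 6 * e m * (1 - (1/2)^k) + 3 * e (m + k)"
      using Suc ds1[of "m+k"] that by simp
    also have "\<dots> = 6 * e m * (1 - (1/2)^Suc k)" unfolding ek by (simp add: algebra_simps)
    finally show ?case .
  qed
  have tail': "dist (s m) (s n) \<le> 6 * e m" if mn: "m \<ge> 1" "n \<ge> m" for m n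
  proof -
    obtain k where nk: "n = m + k" using mn(2) le_Suc_ex by blast
    have "dist (s m) (s n) \<le> 6 * e m * (1 - (1/2)^k)" unfolding nk by (rule tail[OF mn(1)])
    also have "\<dots> \<le> 6 * e m" using epos[of m] by (intro mult_left_le) auto
    finally show ?thesis .
  qed
  have e0: "e \<longlonglongrightarrow> 0" unfolding e_def
    by (intro tendsto_divide_0[OF tendsto_const]) (simp add: filterlim_realpow_sequentially_gt1)
  have "Cauchy s"
  proof (rule metric_CauchyI)
    fix r :: real assume r: "r > 0"
    have "eventually (\<lambda>n. e n < r/12) sequentially" using order_tendstoD(2)[OF e0, of "r/12"] r by simp
    then obtain M where M: "\<And>n. n \<ge> M \<Longrightarrow> e n < r / 12"
      unfolding eventually_sequentially by blast
    show "\<exists>M. \<forall>m\<ge>M. \<forall>n\<ge>M. dist (s m) (s n) < r"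
    proof (intro exI[of _ "Suc M"] allI impI)
      fix m n assume mn: "m \<ge> Suc M" "n \<ge> Suc M"
      have "dist (s m) (s n) \<le> dist (s (Suc M)) (s m) + dist (s (Suc M)) (s n)"
        by (simp add: dist_triangle3)
      also have "\<dots> \<le> 6 * e (Suc M) + 6 * e (Suc M)" by (intro add_mono tail') (use mn in auto)
      also have "\<dots> < r" using M[of "Suc M"] by simp
      finally show "dist (s m) (s n) < r" .
    qed
  qed
  then obtain l where l: "s \<longlonglongrightarrow> l" using Cauchy_convergent_iff convergent_def by blast
  have "(\<lambda>n. p (s n)) \<longlonglongrightarrow> p l"
  proof -
    have "isCont p l" using cont by (simp add: continuous_on_eq_continuous_at)
    then show ?thesis using isCont_tendsto_compose l by blast
  qed
  moreover have "(\<lambda>n. p (s (Suc n))) \<longlonglongrightarrow> y"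
  proof (rule tendsto_dist_iff[THEN iffD2], rule tendsto_sandwich[of "\<lambda>_. 0" _ sequentially e])
    show "\<forall>\<^sub>F n in sequentially. 0 \<le> dist (p (s (Suc n))) y" by simp
    show "\<forall>\<^sub>F n in sequentially. dist (p (s (Suc n))) y \<le> e n"
      using py by (intro always_eventually allI less_imp_le)
  qed (simp_all add: e0)
  then have "(\<lambda>n. p (s n)) \<longlonglongrightarrow> y" by (rule LIMSEQ_imp_Suc)
  ultimately have "p l = y" by (rule LIMSEQ_unique)
  moreover have "dist x l < dist (p x) y + \<delta>"
  proof -
    have lim1: "(\<lambda>n. dist (s 1) (s (Suc n))) \<longlonglongrightarrow> dist (s 1) l"
      using LIMSEQ_Suc[OF l] by (intro tendsto_dist tendsto_const)
    have "dist (s 1) l \<le> 6 * e 1"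
      by (rule LIMSEQ_le_const2[OF lim1]) (intro exI[of _ 0] allI impI tail'; simp)
    moreover have "dist x (s 1) < dist (p x) y + e 0" using ds[of 0] s0 by simp
    ultimately have "dist x l < dist (p x) y + e 0 + 6 * e 1"
      using dist_triangle[of x l "s 1"] by linarith
    moreover have "e 0 + 6 * e 1 < \<delta>" using d by (simp add: e_def c_def)
    ultimately show ?thesis by linarith
  qed
  ultimately show ?thesis by blast
qed

lemma coupling_step:
  fixes \<mu>1 \<mu>2 :: "'a::polish_space measure" and p :: "'a \<Rightarrow> 'b::metric_space"
  assumes lip: "\<forall>x x'. dist (p x) (p x') \<le> dist x x'"
    and cont: "continuous_on UNIV p"
    and P1: "prob_space \<mu>1" and S1: "sets \<mu>1 = sets borel"
    and S2: "sets \<mu>2 = sets borel"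
    and F1: "emeasure \<mu>1 (UNIV - p -` {y1}) = 0"
    and F2: "emeasure \<mu>2 (UNIV - p -` {y2}) = 0"
    and W: "W2 \<mu>1 \<mu>2 = ennreal (dist y1 y2)"
    and Bb: "B \<in> sets borel" and Bpos: "emeasure \<mu>1 B > 0" and t: "t > 0"
  shows "\<exists>x1 x2. x1 \<in> B \<and> p x2 = y2 \<and> (dist x1 x2)\<^sup>2 < (dist y1 y2)\<^sup>2 + t"
proof (rule ccontr)
  assume contra: "\<not> ?thesis"
  define d where "d = dist y1 y2"
  have Wsq: "W2_sq \<mu>1 \<mu>2 = ennreal (d\<^sup>2)"
  proof (cases "W2_sq \<mu>1 \<mu>2 = \<infinity>")
    case True then show ?thesis using W by (simp add: W2_def)
  next
    case False
    then have "sqrt (enn2real (W2_sq \<mu>1 \<mu>2)) = d"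
      using W by (simp add: W2_def d_def)
    then have "enn2real (W2_sq \<mu>1 \<mu>2) = d\<^sup>2" by (metis enn2real_nonneg real_sqrt_pow2)
    moreover have "ennreal (enn2real (W2_sq \<mu>1 \<mu>2)) = W2_sq \<mu>1 \<mu>2"
      using False by (intro ennreal_enn2real) (simp add: less_top)
    ultimately show ?thesis by simp
  qed
  define \<beta> where "\<beta> = emeasure \<mu>1 B"
  have \<beta>top: "\<beta> \<noteq> \<infinity>" unfolding \<beta>_def using finite_measure.emeasure_finite[OF prob_space.finite_measure[OF P1]] by simp
  have \<beta>pos: "\<beta> > 0" using Bpos by (simp add: \<beta>_def)
  have "ennreal (d\<^sup>2) < ennreal (d\<^sup>2) + ennreal t * \<beta>"
    using \<beta>pos t \<beta>top by (simp add: ennreal_add_left_cancel_less[of _ 0, simplified] ennreal_zero_less_mult_iff)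
  then have "(INF \<pi>\<in>couplings \<mu>1 \<mu>2. \<integral>\<^sup>+ z. ennreal ((dist (fst z) (snd z))\<^sup>2) \<partial>\<pi>) < ennreal (d\<^sup>2) + ennreal t * \<beta>"
    using Wsq by (simp add: W2_sq_def)
  then obtain \<pi> where \<pi>: "\<pi> \<in> couplings \<mu>1 \<mu>2"
    and I: "(\<integral>\<^sup>+ z. ennreal ((dist (fst z) (snd z))\<^sup>2) \<partial>\<pi>) < ennreal (d\<^sup>2) + ennreal t * \<beta>"
    by (auto simp: INF_less_iff)
  have S\<pi>: "sets \<pi> = sets (borel :: ('a \<times> 'a) measure)" and P\<pi>: "prob_space \<pi>"
    and M1: "distr \<pi> borel fst = \<mu>1" and M2: "distr \<pi> borel snd = \<mu>2"
    using \<pi> by (auto simp: couplings_def)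
  have sp: "space \<pi> = UNIV" using sets_eq_imp_space_eq[OF S\<pi>] by simp
  have mfst: "fst \<in> measurable \<pi> borel"
    by (subst measurable_cong_sets[OF S\<pi> refl]) (intro borel_measurable_continuous_onI continuous_on_fst continuous_on_id)
  have msnd: "snd \<in> measurable \<pi> borel"
    by (subst measurable_cong_sets[OF S\<pi> refl]) (intro borel_measurable_continuous_onI continuous_on_snd continuous_on_id)
  have closedfib: "closed (p -` {y})" for y
    by (rule closed_vimage[OF closed_singleton cont])
  define A1 where "A1 = (UNIV - p -` {y1}) \<times> (UNIV :: 'a set)"
  define A2 where "A2 = (UNIV :: 'a set) \<times> (UNIV - p -` {y2})"
  define T where "T = {z::'a\<times>'a. d\<^sup>2 + t \<le> (dist (fst z) (snd z))\<^sup>2}"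
  have A1s: "A1 \<in> sets \<pi>" unfolding S\<pi> A1_def
    by (intro borel_open open_Times) (auto simp: closedfib open_Diff)
  have A2s: "A2 \<in> sets \<pi>" unfolding S\<pi> A2_def
    by (intro borel_open open_Times) (auto simp: closedfib open_Diff)
  have Ts: "T \<in> sets \<pi>" unfolding S\<pi> T_def
    by (intro borel_closed closed_Collect_le continuous_intros)
  have BUs: "B \<times> UNIV \<in> sets \<pi>" unfolding S\<pi> using Bb by (simp add: borel_prod[symmetric])
  have eA1: "emeasure \<pi> A1 = 0"
  proof -
    have "emeasure \<pi> A1 = emeasure (distr \<pi> borel fst) (UNIV - p -` {y1})"
      by (subst emeasure_distr[OF mfst]) (auto simp: A1_def sp closedfib vimage_fst intro!: borel_open open_Diff)
    then show ?thesis using M1 F1 by simp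
  qed
  have eA2: "emeasure \<pi> A2 = 0"
  proof -
    have "emeasure \<pi> A2 = emeasure (distr \<pi> borel snd) (UNIV - p -` {y2})"
      by (subst emeasure_distr[OF msnd]) (auto simp: A2_def sp closedfib vimage_snd intro!: borel_open open_Diff)
    then show ?thesis using M2 F2 by simp
  qed
  have eB: "emeasure \<pi> (B \<times> UNIV) = \<beta>"
  proof -
    have "emeasure \<pi> (B \<times> UNIV) = emeasure (distr \<pi> borel fst) B"
      by (subst emeasure_distr[OF mfst]) (auto simp: sp Bb vimage_fst)
    then show ?thesis using M1 by (simp add: \<beta>_def)
  qed
  have AE: "AE z in \<pi>. z \<notin> A1 \<union> A2"
    by (rule AE_I'[of "A1 \<union> A2"]) (use A1s A2s eA1 eA2 in \<open>auto intro!: null_sets.Un\<close>)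
  have "(\<integral>\<^sup>+ z. (ennreal (d\<^sup>2) + ennreal t * indicator T z) \<partial>\<pi>) \<le>
        (\<integral>\<^sup>+ z. ennreal ((dist (fst z) (snd z))\<^sup>2) \<partial>\<pi>)"
  proof (rule nn_integral_mono_AE)
    show "AE z in \<pi>. ennreal (d\<^sup>2) + ennreal t * indicator T z \<le> ennreal ((dist (fst z) (snd z))\<^sup>2)"
      using AE
    proof (rule eventually_mono)
      fix z :: "'a \<times> 'a" assume z: "z \<notin> A1 \<union> A2"
      then have "p (fst z) = y1" "p (snd z) = y2" by (auto simp: A1_def A2_def mem_Times_iff)
      then have "d \<le> dist (fst z) (snd z)" using lip d_def by metis
      then have dd: "d\<^sup>2 \<le> (dist (fst z) (snd z))\<^sup>2"
        by (simp add: d_def power_mono)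
      show "ennreal (d\<^sup>2) + ennreal t * indicator T z \<le> ennreal ((dist (fst z) (snd z))\<^sup>2)"
      proof (cases "z \<in> T")
        case True
        then have "d\<^sup>2 + t \<le> (dist (fst z) (snd z))\<^sup>2" by (simp add: T_def)
        then show ?thesis using True t by (simp add: ennreal_plus[symmetric] ennreal_leI del: ennreal_plus)
      next
        case False then show ?thesis using dd by (simp add: ennreal_leI)
      qed
    qed
  qed
  also note I
  finally have lt: "(\<integral>\<^sup>+ z. (ennreal (d\<^sup>2) + ennreal t * indicator T z) \<partial>\<pi>) < ennreal (d\<^sup>2) + ennreal t * \<beta>" .
  have "(\<integral>\<^sup>+ z. (ennreal (d\<^sup>2) + ennreal t * indicator T z) \<partial>\<pi>) = ennreal (d\<^sup>2) + ennreal t * emeasure \<pi> T"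
    using Ts prob_space.emeasure_space_1[OF P\<pi>]
    by (subst nn_integral_add) (auto simp: nn_integral_cmult_indicator)
  with lt have "ennreal t * emeasure \<pi> T < ennreal t * \<beta>"
    by (simp add: ennreal_add_left_cancel_less)
  then have Tlt: "emeasure \<pi> T < \<beta>"
    by (metis linorder_not_le mult_left_mono zero_le)
  have sub: "B \<times> UNIV \<subseteq> T \<union> (A1 \<union> A2)"
  proof
    fix z :: "'a \<times> 'a" assume zB: "z \<in> B \<times> UNIV"
    show "z \<in> T \<union> (A1 \<union> A2)"
    proof (rule ccontr)
      assume "z \<notin> T \<union> (A1 \<union> A2)"
      then have "z \<notin> T" "p (snd z) = y2" by (auto simp: A2_def mem_Times_iff)
      moreover have "fst z \<in> B" using zB by auto
      ultimately show False using contra by (auto simp: T_def d_def not_le)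
    qed
  qed
  have "\<beta> \<le> emeasure \<pi> (T \<union> (A1 \<union> A2))"
    using emeasure_mono[OF sub] Ts A1s A2s eB by auto
  also have "\<dots> \<le> emeasure \<pi> T + emeasure \<pi> (A1 \<union> A2)"
    using Ts A1s A2s by (intro emeasure_subadditive) auto
  also have "\<dots> \<le> emeasure \<pi> T + (emeasure \<pi> A1 + emeasure \<pi> A2)"
    using A1s A2s by (intro add_left_mono emeasure_subadditive) auto
  also have "\<dots> = emeasure \<pi> T" using eA1 eA2 by simp
  finally show False using Tlt by simp
qed

lemma approx_lift:
  fixes mX :: "'a::polish_space measure" and mY :: "'b::polish_space measure"
    and p :: "'a \<Rightarrow> 'b" and \<mu> :: "'b \<Rightarrow> 'a measure" and \<Omega> :: "'b set"
  assumes mX: "mm_space mX" and mY: "mm_space mY"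
    and lip: "\<forall>x x'. dist (p x) (p x') \<le> dist x x'"
    and cont: "continuous_on UNIV p"
    and dis: "disintegration mX mY p \<mu>"
    and \<Omega>b: "\<Omega> \<in> sets borel" and \<Omega>0: "emeasure mY (UNIV - \<Omega>) = 0"
    and W: "\<forall>y\<in>\<Omega>. \<forall>y'\<in>\<Omega>. W2 (\<mu> y) (\<mu> y') = ennreal (dist y y')"
    and e: "e > 0"
  shows "\<exists>x'. dist x x' < dist (p x) y' + e \<and> dist (p x') y' < e"
proof -
  define \<epsilon> where "\<epsilon> = e / 4"
  have \<epsilon>: "\<epsilon> > 0" using e by (simp add: \<epsilon>_def)
  have SX: "sets mX = sets borel" and SY: "sets mY = sets borel"
    using mX mY by (auto simp: mm_space_def)
  have spX: "space mX = UNIV" using sets_eq_imp_space_eq[OF SX] by simp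
  have spY: "space mY = UNIV" using sets_eq_imp_space_eq[OF SY] by simp
  have kern: "prob_space (\<mu> y) \<and> sets (\<mu> y) = sets borel" for y
    using dis spY SX by (auto simp: disintegration_def)
  define Good where "Good y \<longleftrightarrow> y \<in> \<Omega> \<and> emeasure (\<mu> y) (UNIV - p -` {y}) = 0" for y
  have AEG: "AE y in mY. Good y"
  proof -
    have "AE y in mY. emeasure (\<mu> y) (UNIV - p -` {y}) = 0"
      using dis spX by (simp add: disintegration_def)
    moreover have "AE y in mY. y \<in> \<Omega>"
      by (rule AE_I'[of "UNIV - \<Omega>"]) (use \<Omega>0 \<Omega>b SY spY in auto)
    ultimately show ?thesis unfolding Good_def by eventually_elim auto
  qed
  define B where "B = ball x \<epsilon>"
  have Bb: "B \<in> sets borel" by (simp add: B_def)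
  have "\<exists>y. Good y \<and> emeasure (\<mu> y) B > 0"
  proof (rule ccontr)
    assume "\<not> ?thesis"
    then have AE0: "AE y in mY. emeasure (\<mu> y) B = 0" using AEG
      by (auto elim!: eventually_mono)
    have "(\<integral>\<^sup>+ y. emeasure (\<mu> y) B \<partial>mY) = 0"
      using nn_integral_cong_AE[OF AE0] by simp
    moreover have "(\<integral>\<^sup>+ x. indicator B x \<partial>mX) = (\<integral>\<^sup>+ y. (\<integral>\<^sup>+ x. indicator B x \<partial>(\<mu> y)) \<partial>mY)"
    proof -
      have DI: "\<And>f. f \<in> borel_measurable mX \<Longrightarrow> (\<integral>\<^sup>+ x. f x \<partial>mX) = (\<integral>\<^sup>+ y. (\<integral>\<^sup>+ x. f x \<partial>(\<mu> y)) \<partial>mY)"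
        using dis unfolding disintegration_def by blast
      have "B \<in> sets mX" using Bb SX by simp
      then show ?thesis by (intro DI borel_measurable_indicator)
    qed
    moreover have "(\<integral>\<^sup>+ x. indicator B x \<partial>mX) = emeasure mX B" using Bb SX by simp
    moreover have "(\<integral>\<^sup>+ y. (\<integral>\<^sup>+ x. indicator B x \<partial>(\<mu> y)) \<partial>mY) = (\<integral>\<^sup>+ y. emeasure (\<mu> y) B \<partial>mY)"
      using Bb kern by (intro nn_integral_cong) simp
    moreover have "emeasure mX B > 0" using mX \<epsilon> by (simp add: mm_space_def B_def)
    ultimately show False by simp
  qed
  then obtain y where Gy: "Good y" and By: "emeasure (\<mu> y) B > 0" by blast
  have "B \<inter> p -` {y} \<noteq> {}"
  proof
    assume "B \<inter> p -` {y} = {}"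
    then have "B \<subseteq> UNIV - p -` {y}" by auto
    then have "emeasure (\<mu> y) B \<le> emeasure (\<mu> y) (UNIV - p -` {y})"
      using kern[of y] by (intro emeasure_mono) (auto intro!: borel_open open_Diff closed_vimage[OF closed_singleton cont])
    then show False using Gy By by (simp add: Good_def)
  qed
  then obtain x1 where x1B: "x1 \<in> B" and x1: "p x1 = y" by blast
  from x1B have x1d: "dist x x1 < \<epsilon>" by (simp add: B_def)
  have dpy: "dist (p x) y < \<epsilon>" using lip x1 x1d by (metis le_less_trans)
  have "\<exists>y2. Good y2 \<and> dist y2 y' < \<epsilon>"
  proof (rule ccontr)
    assume "\<not> ?thesis"
    then have "AE z in mY. z \<notin> ball y' \<epsilon>" using AEG
      by (auto elim!: eventually_mono simp: dist_commute)
    then have "ball y' \<epsilon> \<in> null_sets mY"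
      by (subst AE_iff_null_sets) (auto simp: SY)
    moreover have "emeasure mY (ball y' \<epsilon>) > 0" using mY \<epsilon> by (simp add: mm_space_def)
    ultimately show False by (simp add: null_sets_def)
  qed
  then obtain y2 where Gy2: "Good y2" and dy2: "dist y2 y' < \<epsilon>" by blast
  have "\<exists>x1 x2. x1 \<in> B \<and> p x2 = y2 \<and> (dist x1 x2)\<^sup>2 < (dist y y2)\<^sup>2 + \<epsilon>\<^sup>2"
  proof (rule coupling_step[OF lip cont])
    show "prob_space (\<mu> y)" "sets (\<mu> y) = sets borel" "sets (\<mu> y2) = sets borel" using kern by auto
    show "emeasure (\<mu> y) (UNIV - p -` {y}) = 0" "emeasure (\<mu> y2) (UNIV - p -` {y2}) = 0"
      using Gy Gy2 by (auto simp: Good_def)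
    show "W2 (\<mu> y) (\<mu> y2) = ennreal (dist y y2)" using W Gy Gy2 by (auto simp: Good_def)
  qed (use Bb By \<epsilon> in auto)
  then obtain z1 x2 where z1: "z1 \<in> B" and x2: "p x2 = y2"
    and dz: "(dist z1 x2)\<^sup>2 < (dist y y2)\<^sup>2 + \<epsilon>\<^sup>2" by blast
  have "(dist y y2)\<^sup>2 + \<epsilon>\<^sup>2 \<le> (dist y y2 + \<epsilon>)\<^sup>2"
    using \<epsilon> by (simp add: power2_sum)
  with dz have "(dist z1 x2)\<^sup>2 < (dist y y2 + \<epsilon>)\<^sup>2" by linarith
  then have d12: "dist z1 x2 < dist y y2 + \<epsilon>"
    by (rule power_less_imp_less_base[of _ 2]) (use \<epsilon> in auto)
  have "dist y y2 \<le> dist y (p x) + dist (p x) y' + dist y' y2"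
    using dist_triangle[of y y2 "p x"] dist_triangle[of "p x" y2 y'] by linarith
  then have "dist y y2 < dist (p x) y' + 2 * \<epsilon>"
    using dpy dy2 by (simp add: dist_commute)
  moreover have "dist x z1 < \<epsilon>" using z1 by (simp add: B_def)
  moreover have "dist x x2 \<le> dist x z1 + dist z1 x2" by (rule dist_triangle)
  ultimately have "dist x x2 < dist (p x) y' + e" using d12 by (simp add: \<epsilon>_def)
  moreover have "dist (p x2) y' < e" using x2 dy2 \<epsilon> by (simp add: \<epsilon>_def)
  ultimately show ?thesis by blast
qed

lemma lip_cont:
  fixes p :: "'a::metric_space \<Rightarrow> 'b::metric_space"
  assumes lip: "\<forall>x x'. dist (p x) (p x') \<le> dist x x'"
  shows "continuous_on UNIV p"
  unfolding continuous_on_iff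
proof (intro ballI allI impI)
  fix x :: 'a and e :: real assume e: "e > 0"
  show "\<exists>d>0. \<forall>x'\<in>UNIV. dist x' x < d \<longrightarrow> dist (p x') (p x) < e"
    using e lip by (intro exI[of _ e]) (auto intro: le_less_trans)
qed

lemma submetry_of:
  fixes p :: "'a::complete_space \<Rightarrow> 'b::metric_space"
  assumes lip: "\<forall>x x'. dist (p x) (p x') \<le> dist x x'"
    and A: "\<And>x y e. e > 0 \<Longrightarrow> \<exists>x'. dist x x' < dist (p x) y + e \<and> dist (p x') y < e"
  shows "submetry p"
  unfolding submetry_def
proof (intro allI impI equalityI subsetI)
  fix x r z assume r: "(r::real) > 0"
  {
    assume "z \<in> p ` ball x r"
    then obtain x' where "x' \<in> ball x r" "z = p x'" by blast
    then show "z \<in> ball (p x) r" using lip by (auto intro: le_less_trans)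
  next
    assume z: "z \<in> ball (p x) r"
    then have "r - dist (p x) z > 0" by simp
    from lift_exact[OF lip_cont[OF lip] A this, where x=x and y=z] obtain x' where
      "p x' = z" "dist x x' < dist (p x) z + (r - dist (p x) z)" by blast
    then show "z \<in> p ` ball x r" by auto
  }
qed

theorem lemma3p8:
  fixes mX :: "'a::polish_space measure" and mY :: "'b::polish_space measure"
    and p :: "'a \<Rightarrow> 'b" and \<mu> :: "'b \<Rightarrow> 'a measure" and \<Omega> :: "'b set"
  assumes "mm_space mX" and "mm_space mY"
    and "\<forall>x x'. dist (p x) (p x') \<le> dist x x'"
    and "distr mX borel p = mY"
    and "disintegration mX mY p \<mu>"
    and "\<Omega> \<in> sets borel" and "emeasure mY (UNIV - \<Omega>) = 0"
    and "\<forall>y\<in>\<Omega>. \<forall>y'\<in>\<Omega>. W2 (\<mu> y) (\<mu> y') = ennreal (dist y y')"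
  shows "submetry p \<and>
    metric_measure_foliation mX (range (\<lambda>y. p -` {y})) \<and>
    mm_isomorphic UNIV dist mY (range (\<lambda>y. p -` {y})) setdist
      (quot_measure mX (range (\<lambda>y. p -` {y})))"
proof -
  note mX = assms(1) and mY = assms(2) and lip = assms(3) and pY = assms(4) and dis = assms(5)
    and \<Omega>b = assms(6) and \<Omega>0 = assms(7) and W = assms(8)
  have cont: "continuous_on UNIV p" by (rule lip_cont[OF lip])
  have sub: "submetry p"
    by (rule submetry_of[OF lip]) (rule approx_lift[OF mX mY lip cont dis \<Omega>b \<Omega>0 W])
  have SX: "sets mX = sets borel" and SY: "sets mY = sets borel"
    using mX mY by (auto simp: mm_space_def)
  have spX: "space mX = UNIV" using sets_eq_imp_space_eq[OF SX] by simp
  have spY: "space mY = UNIV" using sets_eq_imp_space_eq[OF SY] by simp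
  define \<phi> where "\<phi> = (\<lambda>y. p -` {y})"
  define P where "P = range \<phi>"
  have subm: "\<And>x r. r > 0 \<Longrightarrow> p ` ball x r = ball (p x) r" using sub unfolding submetry_def by blast
  have surj: "\<exists>x. p x = y" for y
  proof -
    obtain x0 :: 'a where True by simp
    have r: "0 < dist (p x0) y + 1" using zero_le_dist[of "p x0" y] by linarith
    have "y \<in> p ` ball x0 (dist (p x0) y + 1)" unfolding subm[OF r] by simp
    then show ?thesis by blast
  qed
  have fib: "x \<in> \<phi> y \<longleftrightarrow> p x = y" for x y by (simp add: \<phi>_def)
  have ne: "\<phi> y \<noteq> {}" for y using surj[of y] fib by blast
  have inj: "inj \<phi>"
  proof (rule injI)
    fix y y' assume "\<phi> y = \<phi> y'"
    moreover obtain x where "p x = y" using surj by blast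
    ultimately show "y = y'" using fib by blast
  qed
  have lift: "\<exists>x'. p x' = y' \<and> dist x x' < dist (p x) y' + \<delta>" if "\<delta> > 0" for x y' \<delta>
  proof -
    have r: "0 < dist (p x) y' + \<delta>" using zero_le_dist[of "p x" y'] that by linarith
    have "y' \<in> p ` ball x (dist (p x) y' + \<delta>)" unfolding subm[OF r] using that by simp
    then show ?thesis by auto
  qed
  have iso: "setdist (\<phi> y) (\<phi> y') = dist y y'" for y y'
  proof (rule antisym)
    show "dist y y' \<le> setdist (\<phi> y) (\<phi> y')"
      by (rule le_setdistI[OF ne ne]) (use lip fib in metis)
    show "setdist (\<phi> y) (\<phi> y') \<le> dist y y'"
    proof (rule field_le_epsilon)
      fix \<delta> :: real assume \<delta>: "\<delta> > 0"
      obtain x where x: "p x = y" using surj by blast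
      obtain x' where x': "p x' = y'" "dist x x' < dist (p x) y' + \<delta>" using lift[OF \<delta>] by blast
      have "setdist (\<phi> y) (\<phi> y') \<le> dist x x'" by (rule setdist_le_dist) (use x x' fib in auto)
      then show "setdist (\<phi> y) (\<phi> y') \<le> dist y y' + \<delta>" using x x' by simp
    qed
  qed
  have infd: "infdist x (\<phi> y') = dist y y'" if "x \<in> \<phi> y" for x y y'
  proof (rule antisym)
    have px: "p x = y" using that fib by simp
    show "dist y y' \<le> infdist x (\<phi> y')"
      unfolding infdist_notempty[OF ne]
      by (rule cINF_greatest[OF ne]) (use lip fib px in metis)
    show "infdist x (\<phi> y') \<le> dist y y'"
    proof (rule field_le_epsilon)
      fix \<delta> :: real assume \<delta>: "\<delta> > 0"
      obtain x' where x': "p x' = y'" "dist x x' < dist (p x) y' + \<delta>" using lift[OF \<delta>] by blast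
      have "infdist x (\<phi> y') \<le> dist x x'" by (rule infdist_le) (use x' fib in auto)
      then show "infdist x (\<phi> y') \<le> dist y y' + \<delta>" using x' px by simp
    qed
  qed
  have MF: "metric_foliation P"
    unfolding metric_foliation_def
  proof (intro conjI ballI impI)
    fix F assume "F \<in> P"
    then obtain y where F: "F = \<phi> y" by (auto simp: P_def)
    show "F \<noteq> {}" using ne F by simp
    show "closed F" unfolding F \<phi>_def by (rule closed_vimage[OF closed_singleton cont])
  next
    fix F F' assume "F \<in> P" "F' \<in> P" "F \<noteq> F'"
    then show "F \<inter> F' = {}" by (auto simp: P_def \<phi>_def)
  next
    show "\<Union> P = UNIV" by (auto simp: P_def fib)
  next
    fix F F' x assume "F \<in> P" "F' \<in> P" "x \<in> F"
    then obtain y y' where "F = \<phi> y" "F' = \<phi> y'" by (auto simp: P_def)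
    then show "setdist F F' = infdist x F'" using iso infd \<open>x \<in> F\<close> by simp
  qed
  have MS: "Metric_space P setdist"
  proof
    fix F F' assume "F \<in> P" "F' \<in> P"
    then obtain y y' where "F = \<phi> y" "F' = \<phi> y'" by (auto simp: P_def)
    then show "(setdist F F' = 0) = (F = F')" using iso inj by (auto dest: injD)
  next
    fix F F' F'' assume "F \<in> P" "F' \<in> P" "F'' \<in> P"
    then obtain y y' y'' where "F = \<phi> y" "F' = \<phi> y'" "F'' = \<phi> y''" by (auto simp: P_def)
    then show "setdist F F'' \<le> setdist F F' + setdist F' F''" using iso dist_triangle by simp
  qed (simp_all add: setdist_sym)
  define \<psi> where "\<psi> = the_inv_into UNIV \<phi>"
  have \<psi>\<phi>: "\<psi> (\<phi> y) = y" for y unfolding \<psi>_def by (rule the_inv_into_f_f[OF inj]) simp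
  have \<phi>\<psi>: "\<phi> (\<psi> F) = F" if "F \<in> P" for F
    unfolding \<psi>_def by (rule f_the_inv_into_f[OF inj]) (use that P_def in simp)
  have \<phi>P: "\<phi> y \<in> P" for y by (simp add: P_def)
  have vim: "\<phi> -` (\<phi> ` S) = S" for S using inj by (auto dest: injD)
  have openP: "openin (Metric_space.mtopology P setdist) U \<longleftrightarrow> U \<subseteq> P \<and> open (\<phi> -` U)" for U
  proof -
    have mb: "Metric_space.mball P setdist (\<phi> y) r = \<phi> ` ball y r" for y r
      unfolding Metric_space.mball_def[OF MS] by (auto simp: P_def iso)
    show ?thesis unfolding Metric_space.openin_mtopology[OF MS]
    proof safe
      assume U: "U \<subseteq> P" and H: "\<forall>x. x \<in> U \<longrightarrow> (\<exists>r>0. Metric_space.mball P setdist x r \<subseteq> U)"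
      show "open (\<phi> -` U)"
        unfolding open_contains_ball
      proof (intro ballI)
        fix y assume "y \<in> \<phi> -` U"
        then obtain r where "r > 0" "Metric_space.mball P setdist (\<phi> y) r \<subseteq> U" using H by auto
        then show "\<exists>e>0. ball y e \<subseteq> \<phi> -` U" unfolding mb by blast
      qed
    next
      fix F assume U: "U \<subseteq> P" and o: "open (\<phi> -` U)" and F: "F \<in> U"
      then have "\<psi> F \<in> \<phi> -` U" using \<phi>\<psi> by auto
      then obtain r where "r > 0" "ball (\<psi> F) r \<subseteq> \<phi> -` U" using o open_contains_ball by blast
      moreover have "\<phi> (\<psi> F) = F" using \<phi>\<psi> U F by auto
      ultimately show "\<exists>r>0. Metric_space.mball P setdist F r \<subseteq> U"
        using mb[of "\<psi> F" r] by (intro exI[of _ r]) auto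
    qed
  qed
  have openPI: "openin (Metric_space.mtopology P setdist) (\<phi> ` S)" if "open S" for S
    unfolding openP vim using that by (auto simp: P_def)
  define Q0 where "Q0 = quot_borel P"
  have Pow: "{U. openin (Metric_space.mtopology P setdist) U} \<subseteq> Pow P" using openP by auto
  have SQ0: "sets Q0 = sigma_sets P {U. openin (Metric_space.mtopology P setdist) U}"
    and spQ0: "space Q0 = P"
    unfolding Q0_def quot_borel_def using Pow by simp_all
  have \<phi>m: "\<phi> \<in> measurable borel Q0"
    unfolding Q0_def quot_borel_def
    by (rule measurable_measure_of[OF Pow]) (auto simp: \<phi>P openP)
  have \<phi>mY: "\<phi> \<in> measurable mY Q0" by (subst measurable_cong_sets[OF SY refl]) (rule \<phi>m)
  have \<psi>m: "\<psi> \<in> borel_measurable Q0"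
  proof (rule borel_measurableI)
    fix S :: "'b set" assume "open S"
    moreover have "\<psi> -` S \<inter> space Q0 = \<phi> ` S"
      unfolding spQ0 using \<phi>\<psi> \<psi>\<phi> by (auto simp: P_def)
    ultimately show "\<psi> -` S \<inter> space Q0 \<in> sets Q0" using openPI by (simp add: SQ0)
  qed
  have qm: "quot_map P x = \<phi> (p x)" for x
    unfolding quot_map_def
    by (rule the_equality) (auto simp: \<phi>P fib P_def)
  have pm: "p \<in> measurable mX borel"
    by (subst measurable_cong_sets[OF SX refl]) (rule borel_measurable_continuous_onI[OF cont])
  define Q where "Q = quot_measure mX P"
  have Qeq: "Q = distr mY Q0 \<phi>"
  proof -
    have "Q = distr mX Q0 (\<phi> \<circ> p)"
      unfolding Q_def quot_measure_def Q0_def by (rule distr_cong) (simp_all add: qm)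
    also have "\<dots> = distr mY Q0 \<phi>" using distr_distr[OF \<phi>m pm] pY by simp
    finally show ?thesis .
  qed
  have SQ: "sets Q = sets Q0" and spQ: "space Q = P" using Qeq spQ0 by simp_all
  have \<psi>mQ: "\<psi> \<in> measurable Q mY"
    by (subst measurable_cong_sets[OF SQ SY]) (rule \<psi>m)
  have \<psi>mQb: "\<psi> \<in> measurable Q borel"
    by (subst measurable_cong_sets[OF SQ refl]) (rule \<psi>m)
  have Yback: "distr Q borel \<psi> = mY"
  proof -
    have "distr Q borel \<psi> = distr mY borel (\<psi> \<circ> \<phi>)" unfolding Qeq by (rule distr_distr[OF \<psi>m \<phi>mY])
    also have "\<dots> = distr mY borel (\<lambda>x. x)" by (rule distr_cong) (simp_all add: \<psi>\<phi>)
    also have "\<dots> = mY" by (rule distr_id2) (simp add: SY)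
    finally show ?thesis .
  qed
  have ISO: "mm_isomorphic UNIV dist mY P setdist Q"
    unfolding mm_isomorphic_def
  proof (intro exI[of _ \<phi>] conjI ballI)
    show "bij_betw \<phi> UNIV P" using inj by (simp add: P_def bij_betw_def)
    show "setdist (\<phi> a) (\<phi> a') = dist a a'" for a a' by (rule iso)
    have "distr mY Q \<phi> = distr mY Q0 \<phi>" by (rule distr_cong) (simp_all add: SQ)
    then show "distr mY Q \<phi> = Q" using Qeq by simp
  qed
  have DK: "prob_space (\<mu> y) \<and> sets (\<mu> y) = sets mX" for y
    using dis spY by (auto simp: disintegration_def)
  have DM: "(\<lambda>y. emeasure (\<mu> y) A) \<in> borel_measurable mY" if "A \<in> sets mX" for A
    using dis that by (auto simp: disintegration_def)
  have DAE: "AE y in mY. emeasure (\<mu> y) (space mX - p -` {y}) = 0"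
    using dis by (simp add: disintegration_def)
  have DI: "\<And>f. f \<in> borel_measurable mX \<Longrightarrow> (\<integral>\<^sup>+ x. f x \<partial>mX) = (\<integral>\<^sup>+ y. (\<integral>\<^sup>+ x. f x \<partial>(\<mu> y)) \<partial>mY)"
    using dis unfolding disintegration_def by blast
  have \<mu>m: "\<mu> \<in> measurable mY (subprob_algebra mX)"
    by (rule measurable_subprob_algebra) (use DK DM prob_space_imp_subprob_space in auto)
  have DIS: "disintegration mX Q (quot_map P) (\<lambda>F. \<mu> (\<psi> F))"
    unfolding disintegration_def
  proof (intro conjI)
    show "\<forall>F\<in>space Q. prob_space (\<mu> (\<psi> F)) \<and> sets (\<mu> (\<psi> F)) = sets mX" using DK by simp
    show "\<forall>A\<in>sets mX. (\<lambda>F. emeasure (\<mu> (\<psi> F)) A) \<in> borel_measurable Q"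
    proof
      fix A assume A: "A \<in> sets mX"
      show "(\<lambda>F. emeasure (\<mu> (\<psi> F)) A) \<in> borel_measurable Q"
        using measurable_compose[OF \<psi>mQ DM[OF A]] by (simp add: comp_def)
    qed
    have key: "quot_map P -` {F} = p -` {\<psi> F}" if F: "F \<in> space Q" for F
      using F \<phi>\<psi>[of F] \<psi>\<phi> by (auto simp: qm spQ)
    have "AE F in Q. emeasure (\<mu> (\<psi> F)) (space mX - p -` {\<psi> F}) = 0"
      by (rule AE_distrD[OF \<psi>mQb]) (unfold Yback, rule DAE)
    moreover have "AE F in Q. F \<in> space Q" by (rule AE_space)
    ultimately show "AE F in Q. emeasure (\<mu> (\<psi> F)) (space mX - quot_map P -` {F}) = 0"
      by eventually_elim (simp add: key)
    show "\<forall>f\<in>borel_measurable mX. (\<integral>\<^sup>+ x. f x \<partial>mX) = (\<integral>\<^sup>+ F. (\<integral>\<^sup>+ x. f x \<partial>(\<mu> (\<psi> F))) \<partial>Q)"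
    proof
    fix f :: "'a \<Rightarrow> ennreal" assume f: "f \<in> borel_measurable mX"
    define h where "h y = (\<integral>\<^sup>+ x. f x \<partial>(\<mu> y))" for y
    have hm: "h \<in> borel_measurable mY"
      unfolding h_def using measurable_compose[OF \<mu>m nn_integral_measurable_subprob_algebra[OF f]]
      by (simp add: comp_def)
    have "(\<integral>\<^sup>+ F. h (\<psi> F) \<partial>Q) = (\<integral>\<^sup>+ y. h (\<psi> (\<phi> y)) \<partial>mY)"
      unfolding Qeq
    proof (rule nn_integral_distr[OF \<phi>mY])
      show "(\<lambda>F. h (\<psi> F)) \<in> borel_measurable (distr mY Q0 \<phi>)"
        using measurable_compose[OF \<psi>mQ hm] Qeq by (simp add: comp_def)
    qed
    also have "\<dots> = (\<integral>\<^sup>+ y. h y \<partial>mY)" by (simp add: \<psi>\<phi>)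
    also have "\<dots> = (\<integral>\<^sup>+ x. f x \<partial>mX)" using DI[OF f] by (simp add: h_def)
    finally show "(\<integral>\<^sup>+ x. f x \<partial>mX) = (\<integral>\<^sup>+ F. (\<integral>\<^sup>+ x. f x \<partial>(\<mu> (\<psi> F))) \<partial>Q)"
      by (simp add: h_def)
    qed
  qed
  have \<Omega>Q: "\<phi> ` \<Omega> \<in> sets Q"
  proof -
    have "\<phi> ` \<Omega> = \<psi> -` \<Omega> \<inter> space Q"
      unfolding spQ using \<phi>\<psi> \<psi>\<phi> by (auto simp: P_def)
    then show ?thesis using measurable_sets[OF \<psi>mQb \<Omega>b] by simp
  qed
  have \<Omega>Q0: "emeasure Q (P - \<phi> ` \<Omega>) = 0"
  proof -
    have "P - \<phi> ` \<Omega> \<in> sets Q0" using sets.compl_sets[of "\<phi> ` \<Omega>" Q0] \<Omega>Q SQ spQ0 by simp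
    then have "emeasure Q (P - \<phi> ` \<Omega>) = emeasure mY (\<phi> -` (P - \<phi> ` \<Omega>) \<inter> space mY)"
      unfolding Qeq by (rule emeasure_distr[OF \<phi>mY])
    also have "\<phi> -` (P - \<phi> ` \<Omega>) \<inter> space mY = UNIV - \<Omega>" using inj \<phi>P spY by (auto simp: inj_image_mem_iff)
    finally show ?thesis using \<Omega>0 by simp
  qed
  have LF: "\<exists>r>0. emeasure Q (Metric_space.mball P setdist F r) < \<infinity>" if FP: "F \<in> P" for F
  proof -
    obtain y where F: "F = \<phi> y" using FP by (auto simp: P_def)
    have mb: "Metric_space.mball P setdist F 1 = \<phi> ` ball y 1"
      unfolding Metric_space.mball_def[OF MS] F by (auto simp: P_def iso)
    have "\<phi> ` ball y 1 \<in> sets Q0" using openPI[of "ball y 1"] by (simp add: SQ0)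
    then have "emeasure Q (\<phi> ` ball y 1) = emeasure mY (\<phi> -` (\<phi> ` ball y 1) \<inter> space mY)"
      unfolding Qeq by (rule emeasure_distr[OF \<phi>mY])
    also have "\<dots> = emeasure mY (ball y 1)" using vim spY by simp
    also have "\<dots> < \<infinity>" using mY by (simp add: mm_space_def)
    finally show ?thesis using mb by (intro exI[of _ 1]) simp
  qed
  have MMF: "metric_measure_foliation mX P"
    unfolding metric_measure_foliation_def Q_def[symmetric]
  proof (intro conjI MF ballI LF exI[of _ "\<lambda>F. \<mu> (\<psi> F)"] DIS bexI[OF _ \<Omega>Q] \<Omega>Q0)
    fix F F' assume "F \<in> \<phi> ` \<Omega>" "F' \<in> \<phi> ` \<Omega>"
    then obtain y y' where "y \<in> \<Omega>" "y' \<in> \<Omega>" "F = \<phi> y" "F' = \<phi> y'" by blast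
    then show "W2 (\<mu> (\<psi> F)) (\<mu> (\<psi> F')) = ennreal (setdist F F')" using W \<psi>\<phi> iso by simp
  qed
  have "submetry p \<and> metric_measure_foliation mX P \<and> mm_isomorphic UNIV dist mY P setdist Q"
    using sub MMF ISO by simp
  then show ?thesis by (simp add: P_def Q_def \<phi>_def)
qed

end
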